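(* Let $\mathcal{H}$ be a Hilbert space of finite dimension $d\ge2$, let $\mathcal{F}(\mathcal{H})\subseteq\mathcal{D}(\mathcal{H})$ be a closed set of free states (not assumed convex), and let $\rho\in\mathcal{D}(\mathcal{H})\setminus\mathcal{F}(\mathcal{H})$. Then there exists a family of channel ensembles $\big(\{p_i,\Lambda_i^{(m)}\}_i\big)_{m=2}^d$ such that \[\max_{\sigma\in\mathcal{F}(\mathcal{H})}\ \min_{m=2,\dots,d}\ \frac{\min_{\{M_i\}_i}p_{\mathrm{err}}(\{p_i,\Lambda_i^{(m)}\}_i,\{M_i\}_i,\rho^{\otimes m})}{\min_{\{M_i\}_i}p_{\mathrm{err}}(\{p_i,\Lambda_i^{(m)}\}_i,\{M_i\}_i,\sigma^{\otimes m})}<1.\]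
   Context: $\mathcal{D}(\mathcal{H})$ is the set of density operators on $\mathcal{H}$. A channel ensemble $\{p_i,\Lambda_i^{(m)}\}_i$ is a finite probability distribution $(p_i)_i$ with quantum channels $\Lambda_i^{(m)}$ from operators on $\mathcal{H}^{\otimes m}$ to operators on a common finite-dimensional output space. For a POVM $\{M_i\}_i$ on the output space (same index set) and a state $\omega$ on $\mathcal{H}^{\otimes m}$, the error probability of channel exclusion is $p_{\mathrm{err}}(\{p_i,\Lambda_i^{(m)}\}_i,\{M_i\}_i,\omega)=\sum_ip_i\operatorname{tr}[M_i\Lambda_i^{(m)}(\omega)]$; the minima are over all such POVMs. *)

theory Defs
  imports "HOL-Analysis.Analysis"
begin

text \<open>Operators on a finite-dimensional Hilbert space with orthonormal basis indexed by
  a finite set B are represented as matrices B x B, i.e. functions b => b => complex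
  that vanish outside B x B.\<close>

definition op_on :: "'b set \<Rightarrow> ('b \<Rightarrow> 'b \<Rightarrow> complex) \<Rightarrow> bool" where
  "op_on B X \<longleftrightarrow> (\<forall>i j. (i \<notin> B \<or> j \<notin> B) \<longrightarrow> X i j = 0)"

definition psd :: "'b set \<Rightarrow> ('b \<Rightarrow> 'b \<Rightarrow> complex) \<Rightarrow> bool" where
  "psd B X \<longleftrightarrow> op_on B X \<and> (\<forall>i\<in>B. \<forall>j\<in>B. X j i = cnj (X i j)) \<and>
     (\<forall>v :: 'b \<Rightarrow> complex.
        Im (\<Sum>i\<in>B. \<Sum>j\<in>B. cnj (v i) * X i j * v j) = 0 \<and>
        Re (\<Sum>i\<in>B. \<Sum>j\<in>B. cnj (v i) * X i j * v j) \<ge> 0)"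

definition tr :: "'b set \<Rightarrow> ('b \<Rightarrow> 'b \<Rightarrow> complex) \<Rightarrow> complex" where
  "tr B X = (\<Sum>i\<in>B. X i i)"

definition density :: "'b set \<Rightarrow> ('b \<Rightarrow> 'b \<Rightarrow> complex) \<Rightarrow> bool" where
  "density B X \<longleftrightarrow> psd B X \<and> tr B X = 1"

text \<open>Quantum channel (CPTP linear map) from operators on the space with basis B to
  operators on the output space C^n (basis {..<n}). Complete positivity: id_k (x) Lambda
  is positive for every k.\<close>
definition channel :: "'b set \<Rightarrow> nat \<Rightarrow> (('b \<Rightarrow> 'b \<Rightarrow> complex) \<Rightarrow> (nat \<Rightarrow> nat \<Rightarrow> complex)) \<Rightarrow> bool" where
  "channel B n \<Lambda> \<longleftrightarrow>
     (\<forall>X Y c. op_on B X \<longrightarrow> op_on B Y \<longrightarrow>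
        \<Lambda> (\<lambda>i j. c * X i j + Y i j) = (\<lambda>i j. c * \<Lambda> X i j + \<Lambda> Y i j)) \<and>
     (\<forall>X. op_on B X \<longrightarrow> op_on {..<n} (\<Lambda> X)) \<and>
     (\<forall>X. op_on B X \<longrightarrow> tr {..<n} (\<Lambda> X) = tr B X) \<and>
     (\<forall>k::nat. \<forall>X. psd ({..<k} \<times> B) X \<longrightarrow>
        psd ({..<k} \<times> {..<n})
          (\<lambda>u w. \<Lambda> (\<lambda>x y. X (fst u, x) (fst w, y)) (snd u) (snd w)))"

definition ensemble :: "'b set \<Rightarrow> nat \<Rightarrow> nat \<Rightarrow> (nat \<Rightarrow> real) \<Rightarrow>
    (nat \<Rightarrow> ('b \<Rightarrow> 'b \<Rightarrow> complex) \<Rightarrow> (nat \<Rightarrow> nat \<Rightarrow> complex)) \<Rightarrow> bool" where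
  "ensemble B n N p \<Lambda> \<longleftrightarrow> (\<forall>i<N. p i \<ge> 0) \<and> (\<Sum>i<N. p i) = 1 \<and> (\<forall>i<N. channel B n (\<Lambda> i))"

definition povm :: "nat \<Rightarrow> nat \<Rightarrow> (nat \<Rightarrow> nat \<Rightarrow> nat \<Rightarrow> complex) \<Rightarrow> bool" where
  "povm n N M \<longleftrightarrow> (\<forall>i<N. psd {..<n} (M i)) \<and>
     (\<forall>a b. (\<Sum>i<N. M i a b) = (if a = b \<and> a < n then 1 else 0))"

definition perr :: "nat \<Rightarrow> nat \<Rightarrow> (nat \<Rightarrow> real) \<Rightarrow>
    (nat \<Rightarrow> ('b \<Rightarrow> 'b \<Rightarrow> complex) \<Rightarrow> (nat \<Rightarrow> nat \<Rightarrow> complex)) \<Rightarrow>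
    (nat \<Rightarrow> nat \<Rightarrow> nat \<Rightarrow> complex) \<Rightarrow> ('b \<Rightarrow> 'b \<Rightarrow> complex) \<Rightarrow> real" where
  "perr n N p \<Lambda> M \<omega> = (\<Sum>i<N. p i * Re (\<Sum>a<n. \<Sum>b<n. M i a b * \<Lambda> i \<omega> b a))"

text \<open>Minimal error probability over all POVMs (the minimum is attained; Inf = min).\<close>
definition minerr :: "nat \<Rightarrow> nat \<Rightarrow> (nat \<Rightarrow> real) \<Rightarrow>
    (nat \<Rightarrow> ('b \<Rightarrow> 'b \<Rightarrow> complex) \<Rightarrow> (nat \<Rightarrow> nat \<Rightarrow> complex)) \<Rightarrow>
    ('b \<Rightarrow> 'b \<Rightarrow> complex) \<Rightarrow> real" where
  "minerr n N p \<Lambda> \<omega> = Inf {perr n N p \<Lambda> M \<omega> | M. povm n N M}"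

text \<open>Matrix of an operator on H = C^'n, and its m-fold tensor power on H^(x)m,
  whose basis is the set of index words of length m.\<close>
definition mfun :: "complex^'n^'n \<Rightarrow> ('n \<Rightarrow> 'n \<Rightarrow> complex)" where
  "mfun A = (\<lambda>i j. A $ i $ j)"

definition words :: "nat \<Rightarrow> 'n list set" where
  "words m = {xs. length xs = m}"

definition tpow :: "nat \<Rightarrow> ('n \<Rightarrow> 'n \<Rightarrow> complex) \<Rightarrow> ('n list \<Rightarrow> 'n list \<Rightarrow> complex)" where
  "tpow m X = (\<lambda>xs ys. if length xs = m \<and> length ys = m
                        then (\<Prod>k<m. X (xs ! k) (ys ! k)) else 0)"

end

theory Submission
  imports Defs
begin


definition dl :: "'a \<Rightarrow> 'a \<Rightarrow> complex" where "dl x y = (if x = y then 1 else 0)"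
definition TT :: "'b set \<Rightarrow> ('b \<Rightarrow> 'b \<Rightarrow> complex) \<Rightarrow> ('b \<Rightarrow> 'b \<Rightarrow> complex) \<Rightarrow> complex" where
  "TT B A X = (\<Sum>x\<in>B. \<Sum>y\<in>B. A x y * X y x)"
definition Ic :: "('b \<Rightarrow> 'b \<Rightarrow> complex) \<Rightarrow> ('b \<Rightarrow> 'b \<Rightarrow> complex)" where
  "Ic A = (\<lambda>x y. dl x y - A x y)"
definition mp :: "'b set \<Rightarrow> ('b \<Rightarrow> 'b \<Rightarrow> complex) \<Rightarrow> ('b \<Rightarrow> 'b \<Rightarrow> complex) \<Rightarrow> nat \<Rightarrow> nat \<Rightarrow> complex" where
  "mp B A X = (\<lambda>a b. if a = 0 \<and> b = 0 then TT B A X else if a = 1 \<and> b = 1 then TT B (Ic A) X else 0)"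

definition herm :: "'b set \<Rightarrow> ('b \<Rightarrow> 'b \<Rightarrow> complex) \<Rightarrow> bool" where
  "herm B A \<longleftrightarrow> (\<forall>x\<in>B. \<forall>y\<in>B. A y x = cnj (A x y))"
definition ddom :: "'b set \<Rightarrow> ('b \<Rightarrow> 'b \<Rightarrow> complex) \<Rightarrow> bool" where
  "ddom B A \<longleftrightarrow> (\<forall>x\<in>B. (\<Sum>y\<in>B. cmod (A x y)) \<le> 2 * Re (A x x))"
definition qpos :: "'b set \<Rightarrow> ('b \<Rightarrow> 'b \<Rightarrow> complex) \<Rightarrow> bool" where
  "qpos B X \<longleftrightarrow> (\<forall>v :: 'b \<Rightarrow> complex.
        Im (\<Sum>i\<in>B. \<Sum>j\<in>B. cnj (v i) * X i j * v j) = 0 \<and>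
        Re (\<Sum>i\<in>B. \<Sum>j\<in>B. cnj (v i) * X i j * v j) \<ge> 0)"

lemma psd_iff: "psd B X \<longleftrightarrow> op_on B X \<and> herm B X \<and> qpos B X"
  unfolding psd_def herm_def qpos_def by blast

lemma two_sum:
  assumes "finite B" "x \<in> B" "y \<in> B" "x \<noteq> y" "\<forall>p\<in>B. p \<noteq> x \<and> p \<noteq> y \<longrightarrow> f p = 0"
  shows "(\<Sum>p\<in>B. f p) = f x + f y"
proof -
  have "(\<Sum>p\<in>B. f p) = (\<Sum>p\<in>{x,y}. f p)"
    using assms by (intro sum.mono_neutral_right) auto
  then show ?thesis using assms by simp
qed

lemma one_sum:
  assumes "finite B" "x \<in> B" "\<forall>p\<in>B. p \<noteq> x \<longrightarrow> f p = 0"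
  shows "(\<Sum>p\<in>B. f p) = f x"
proof -
  have "(\<Sum>p\<in>B. f p) = (\<Sum>p\<in>{x}. f p)"
    using assms by (intro sum.mono_neutral_right) auto
  then show ?thesis using assms by simp
qed

lemma diag_nonneg:
  assumes "finite B" "qpos B G" "x \<in> B"
  shows "Im (G x x) = 0 \<and> Re (G x x) \<ge> 0"
proof -
  define v :: "_ \<Rightarrow> complex" where "v = (\<lambda>p. if p = x then 1 else 0)"
  have vx: "v x = 1" and vo: "\<And>p. p \<noteq> x \<Longrightarrow> v p = 0" by (auto simp: v_def)
  have h: "(\<Sum>j\<in>B. cnj (v i) * G i j * v j) = cnj (v i) * G i x * v x" for i
    by (rule one_sum[OF assms(1,3)]) (simp add: vo)
  have h2: "(\<Sum>i\<in>B. cnj (v i) * G i x * v x) = cnj (v x) * G x x * v x"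
    by (rule one_sum[OF assms(1,3)]) (simp add: vo)
  have e: "(\<Sum>i\<in>B. \<Sum>j\<in>B. cnj (v i) * G i j * v j) = G x x"
    unfolding h h2 by (simp add: vx)
  have "Im (\<Sum>i\<in>B. \<Sum>j\<in>B. cnj (v i) * G i j * v j) = 0 \<and> Re (\<Sum>i\<in>B. \<Sum>j\<in>B. cnj (v i) * G i j * v j) \<ge> 0"
    using assms(2) unfolding qpos_def by blast
  then show ?thesis unfolding e .
qed

lemma zcnj: "z * cnj z = complex_of_real ((cmod z)^2)"
  by (simp only: complex_mult_cnj cmod_power2)
lemma phase1:
  assumes "(z::complex) \<noteq> 0"
  shows "(- cnj z / of_real (cmod z)) * z = - of_real (cmod z)"
proof -
  have r: "cmod z \<noteq> 0" using assms by simp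
  have "(- cnj z / of_real (cmod z)) * z = - (z * cnj z) / of_real (cmod z)"
    by (simp add: mult.commute)
  also have "\<dots> = - of_real ((cmod z)^2 / cmod z)" by (simp only: zcnj of_real_divide) simp
  also have "(cmod z)^2 / cmod z = cmod z" using r by (simp add: power2_eq_square)
  finally show ?thesis .
qed
lemma phase2:
  assumes "(z::complex) \<noteq> 0"
  shows "cnj (- cnj z / of_real (cmod z)) * (- cnj z / of_real (cmod z)) = 1"
proof -
  have r: "cmod z \<noteq> 0" using assms by simp
  have "cnj (- cnj z / of_real (cmod z)) * (- cnj z / of_real (cmod z)) = (z * cnj z) / (of_real (cmod z) * of_real (cmod z))"
    by simp
  also have "\<dots> = of_real ((cmod z)^2 / (cmod z * cmod z))" by (simp only: zcnj of_real_divide of_real_mult)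
  also have "(cmod z)^2 / (cmod z * cmod z) = 1" using r by (simp add: power2_eq_square)
  finally show ?thesis by simp
qed


lemma offdiag_bound:
  assumes "finite B" "herm B G" "qpos B G" "x \<in> B" "y \<in> B"
  shows "cmod (G x y) \<le> (Re (G x x) + Re (G y y)) / 2"
proof (cases "x = y")
  case True
  then show ?thesis using diag_nonneg[OF assms(1,3,4)]
    by (simp add: cmod_def)
next
  case ne: False
  show ?thesis
  proof (cases "G x y = 0")
    case True
    then show ?thesis using diag_nonneg[OF assms(1,3,4)] diag_nonneg[OF assms(1,3,5)] by simp
  next
    case nz: False
    define z where "z = G x y"
    define r where "r = cmod z"
    define t where "t = - cnj z / of_real (cmod z)"
    have znz: "z \<noteq> 0" using nz unfolding z_def .
    have tz: "t * z = - of_real r" unfolding t_def r_def by (rule phase1[OF znz])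
    have tt: "cnj t * t = 1" unfolding t_def by (rule phase2[OF znz])
    have Gyx: "G y x = cnj z" using assms(2,4,5) unfolding herm_def z_def by blast
    define v :: "_ \<Rightarrow> complex" where "v = (\<lambda>p. if p = x then 1 else if p = y then t else 0)"
    have vx: "v x = 1" and vy: "v y = t" and vo: "\<And>p. p \<noteq> x \<Longrightarrow> p \<noteq> y \<Longrightarrow> v p = 0"
      using ne by (auto simp: v_def)
    have h: "(\<Sum>j\<in>B. cnj (v i) * G i j * v j) = cnj (v i) * G i x * v x + cnj (v i) * G i y * v y" for i
      by (rule two_sum[OF assms(1,4,5) ne]) (simp add: vo)
    have h2: "(\<Sum>i\<in>B. cnj (v i) * G i x * v x + cnj (v i) * G i y * v y) =
          (cnj (v x) * G x x * v x + cnj (v x) * G x y * v y) + (cnj (v y) * G y x * v x + cnj (v y) * G y y * v y)"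
      by (rule two_sum[OF assms(1,4,5) ne]) (simp add: vo)
    have e: "(cnj (v x) * G x x * v x + cnj (v x) * G x y * v y) + (cnj (v y) * G y x * v x + cnj (v y) * G y y * v y)
       = G x x + G y y - 2 * of_real r"
    proof -
      have a: "cnj (v y) * G y x * v x = cnj (t * z)" using Gyx vx vy by simp
      have b: "cnj (v y) * G y y * v y = G y y" using tt vy by (simp add: mult.commute mult.left_commute)
      have c: "cnj (v x) * G x y * v y = t * z" using vx vy by (simp add: z_def mult.commute)
      show ?thesis unfolding a b c tz using vx by simp
    qed
    have "(\<Sum>i\<in>B. \<Sum>j\<in>B. cnj (v i) * G i j * v j) = G x x + G y y - 2 * of_real r"
      unfolding h h2 e ..
    moreover have "Re (\<Sum>i\<in>B. \<Sum>j\<in>B. cnj (v i) * G i j * v j) \<ge> 0" using assms(3) unfolding qpos_def by blast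
    ultimately have "Re (G x x + G y y - 2 * of_real r) \<ge> 0" by simp
    then show ?thesis by (simp add: r_def z_def)
  qed
qed



lemma herm_diag_real: "herm B A \<Longrightarrow> x \<in> B \<Longrightarrow> Im (A x x) = 0"
proof -
  assume "herm B A" "x \<in> B"
  then have "A x x = cnj (A x x)" unfolding herm_def by blast
  then have "Im (A x x) = Im (cnj (A x x))" by simp
  then show ?thesis by simp
qed

lemma cnj_self_Im: "cnj z = z \<Longrightarrow> Im z = 0"
  by (auto simp: complex_eq_iff)

lemma pointwise_bound:
  assumes "finite B" "herm B G" "qpos B G" "herm B A" "x \<in> B" "y \<in> B"
  shows "Re (A x y * G y x) \<ge> (if x = y then 2 * Re (A x x) * Re (G x x) else 0)
            - cmod (A x y) * ((Re (G x x) + Re (G y y)) / 2)"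
proof (cases "x = y")
  case True
  have a: "Im (A x x) = 0" by (rule herm_diag_real[OF assms(4,5)])
  have g: "Im (G x x) = 0" "Re (G x x) \<ge> 0" using diag_nonneg[OF assms(1,3,5)] by auto
  have ca: "cmod (A x x) = \<bar>Re (A x x)\<bar>" using a by (simp add: cmod_def)
  have "Re (A x x * G x x) = Re (A x x) * Re (G x x)" using a g by simp
  moreover have "Re (A x x) * Re (G x x) \<le> \<bar>Re (A x x)\<bar> * Re (G x x)"
    using g(2) by (simp add: mult_right_mono)
  ultimately show ?thesis using True ca a g(1) by simp
next
  case False
  have c: "cmod (G y x) \<le> (Re (G x x) + Re (G y y)) / 2" using offdiag_bound[OF assms(1,2,3,6,5)] by (simp add: add.commute)
  have "cmod (A x y) * cmod (G y x) \<le> cmod (A x y) * ((Re (G x x) + Re (G y y)) / 2)"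
    by (rule mult_left_mono[OF c norm_ge_zero])
  moreover have "- cmod (A x y * G y x) \<le> Re (A x y * G y x)"
    using abs_Re_le_cmod[of "A x y * G y x"] by linarith
  ultimately show ?thesis using False by (simp add: norm_mult)
qed

lemma trace_pos:
  assumes "finite B" "herm B G" "qpos B G" "herm B A" "ddom B A"
  shows "Im (\<Sum>x\<in>B. \<Sum>y\<in>B. A x y * G y x) = 0 \<and> Re (\<Sum>x\<in>B. \<Sum>y\<in>B. A x y * G y x) \<ge> 0"
proof
  let ?S = "\<Sum>x\<in>B. \<Sum>y\<in>B. A x y * G y x"
  have "cnj ?S = (\<Sum>x\<in>B. \<Sum>y\<in>B. cnj (A x y) * cnj (G y x))" by simp
  also have "\<dots> = (\<Sum>x\<in>B. \<Sum>y\<in>B. A y x * G x y)"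
  proof (intro sum.cong refl)
    fix x y assume "x \<in> B" "y \<in> B"
    then have "A y x = cnj (A x y)" "G y x = cnj (G x y)" using assms(2,4) unfolding herm_def by blast+
    then show "cnj (A x y) * cnj (G y x) = A y x * G x y" by simp
  qed
  also have "\<dots> = ?S" by (rule sum.swap)
  finally have "cnj ?S = ?S" .
  then show "Im ?S = 0" by (rule cnj_self_Im)
next
  let ?g = "\<lambda>x. Re (G x x)"
  have "Re (\<Sum>x\<in>B. \<Sum>y\<in>B. A x y * G y x) = (\<Sum>x\<in>B. \<Sum>y\<in>B. Re (A x y * G y x))"
    by (simp add: Re_sum)
  also have "\<dots> \<ge> (\<Sum>x\<in>B. \<Sum>y\<in>B. (if x = y then 2 * Re (A x x) * ?g x else 0)
            - cmod (A x y) * ((?g x + ?g y) / 2))"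
    by (intro sum_mono pointwise_bound[OF assms(1-4)])
  moreover have "(\<Sum>x\<in>B. \<Sum>y\<in>B. (if x = y then 2 * Re (A x x) * ?g x else 0)
            - cmod (A x y) * ((?g x + ?g y) / 2))
       = (\<Sum>x\<in>B. ?g x * (2 * Re (A x x) - (\<Sum>y\<in>B. cmod (A x y))))"
  proof -
    have s1: "(\<Sum>x\<in>B. \<Sum>y\<in>B. (if x = y then 2 * Re (A x x) * ?g x else 0)) = (\<Sum>x\<in>B. 2 * Re (A x x) * ?g x)"
      using assms(1) by simp
    have s2: "(\<Sum>x\<in>B. \<Sum>y\<in>B. cmod (A x y) * ?g y) = (\<Sum>x\<in>B. \<Sum>y\<in>B. cmod (A x y) * ?g x)"
    proof -
      have "(\<Sum>x\<in>B. \<Sum>y\<in>B. cmod (A x y) * ?g y) = (\<Sum>y\<in>B. \<Sum>x\<in>B. cmod (A x y) * ?g y)"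
        by (rule sum.swap)
      also have "\<dots> = (\<Sum>y\<in>B. \<Sum>x\<in>B. cmod (A y x) * ?g y)"
      proof (intro sum.cong refl)
        fix x y assume "x \<in> B" "y \<in> B"
        then have "A y x = cnj (A x y)" using assms(4) unfolding herm_def by blast
        then show "cmod (A x y) * ?g y = cmod (A y x) * ?g y" by simp
      qed
      finally show ?thesis .
    qed
    have pw: "(if x = y then 2 * Re (A x x) * ?g x else 0) - cmod (A x y) * ((?g x + ?g y) / 2)
       = (if x = y then 2 * Re (A x x) * ?g x else 0) - (cmod (A x y) * ?g x) / 2 - (cmod (A x y) * ?g y) / 2" for x y
      by (simp add: ring_distribs add_divide_distrib)
    have "(\<Sum>x\<in>B. \<Sum>y\<in>B. (if x = y then 2 * Re (A x x) * ?g x else 0)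
            - cmod (A x y) * ((?g x + ?g y) / 2))
        = (\<Sum>x\<in>B. \<Sum>y\<in>B. (if x = y then 2 * Re (A x x) * ?g x else 0))
          - ((\<Sum>x\<in>B. \<Sum>y\<in>B. cmod (A x y) * ?g x) + (\<Sum>x\<in>B. \<Sum>y\<in>B. cmod (A x y) * ?g y)) / 2"
      unfolding pw by (simp only: sum_subtractf sum_divide_distrib[symmetric] add_divide_distrib)
    also have "\<dots> = (\<Sum>x\<in>B. 2 * Re (A x x) * ?g x) - (\<Sum>x\<in>B. \<Sum>y\<in>B. cmod (A x y) * ?g x)"
      unfolding s1 s2 by simp
    also have "\<dots> = (\<Sum>x\<in>B. ?g x * (2 * Re (A x x) - (\<Sum>y\<in>B. cmod (A x y))))"
      by (simp add: sum_subtractf sum_distrib_left sum_distrib_right algebra_simps)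
    finally show ?thesis .
  qed
  moreover have "(\<Sum>x\<in>B. ?g x * (2 * Re (A x x) - (\<Sum>y\<in>B. cmod (A x y)))) \<ge> 0"
  proof (intro sum_nonneg mult_nonneg_nonneg)
    fix x assume "x \<in> B"
    then show "?g x \<ge> 0" using diag_nonneg[OF assms(1,3)] by blast
    show "2 * Re (A x x) - (\<Sum>y\<in>B. cmod (A x y)) \<ge> 0" using assms(5) \<open>x \<in> B\<close> unfolding ddom_def by auto
  qed
  ultimately show "Re (\<Sum>x\<in>B. \<Sum>y\<in>B. A x y * G y x) \<ge> 0" by linarith
qed


lemma hermD: "herm B A \<Longrightarrow> x \<in> B \<Longrightarrow> y \<in> B \<Longrightarrow> A y x = cnj (A x y)"
  unfolding herm_def by blast

lemma swap4:
  "(\<Sum>a\<in>K. \<Sum>b\<in>L. \<Sum>c\<in>M. \<Sum>d\<in>N. h a b c d) = (\<Sum>c\<in>M. \<Sum>d\<in>N. \<Sum>a\<in>K. \<Sum>b\<in>L. h a b c d)"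
proof -
  have "(\<Sum>a\<in>K. \<Sum>b\<in>L. \<Sum>c\<in>M. \<Sum>d\<in>N. h a b c d) = (\<Sum>a\<in>K. \<Sum>c\<in>M. \<Sum>b\<in>L. \<Sum>d\<in>N. h a b c d)"
    by (intro sum.cong refl, rule sum.swap)
  also have "\<dots> = (\<Sum>c\<in>M. \<Sum>a\<in>K. \<Sum>b\<in>L. \<Sum>d\<in>N. h a b c d)" by (rule sum.swap)
  also have "\<dots> = (\<Sum>c\<in>M. \<Sum>a\<in>K. \<Sum>d\<in>N. \<Sum>b\<in>L. h a b c d)"
    by (intro sum.cong refl, rule sum.swap)
  also have "\<dots> = (\<Sum>c\<in>M. \<Sum>d\<in>N. \<Sum>a\<in>K. \<Sum>b\<in>L. h a b c d)"
    by (intro sum.cong refl, rule sum.swap)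
  finally show ?thesis .
qed

lemma TT_lin: "TT B A (\<lambda>i j. c * X i j + Y i j) = c * TT B A X + TT B A Y"
  unfolding TT_def by (simp add: ring_distribs sum.distrib sum_distrib_left mult.left_commute)

lemma TT_zero: "(\<forall>x\<in>B. \<forall>y\<in>B. Z y x = 0) \<Longrightarrow> TT B M Z = 0"
  unfolding TT_def by simp

lemma dl_same: "dl x x = 1" by (simp add: dl_def)
lemma dl_diff: "x \<noteq> y \<Longrightarrow> dl x y = 0" by (simp add: dl_def)

lemma TT_Ic: assumes "finite B" shows "TT B A X + TT B (Ic A) X = tr B X"
proof -
  have "TT B A X + TT B (Ic A) X = (\<Sum>x\<in>B. \<Sum>y\<in>B. dl x y * X y x)"
    unfolding TT_def Ic_def by (simp add: sum.distrib[symmetric] ring_distribs)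
  also have "\<dots> = (\<Sum>x\<in>B. X x x)"
  proof (rule sum.cong[OF refl])
    fix x assume x: "x \<in> B"
    have "(\<Sum>y\<in>B. dl x y * X y x) = dl x x * X x x"
      by (rule one_sum[OF assms x]) (simp add: dl_diff)
    then show "(\<Sum>y\<in>B. dl x y * X y x) = X x x" by (simp add: dl_same)
  qed
  finally show ?thesis unfolding tr_def .
qed

lemma TT_block_herm:
  assumes "herm B M" "herm ({..<k} \<times> B) X" "a < k" "b < k"
  shows "TT B M (\<lambda>x y. X (b, x) (a, y)) = cnj (TT B M (\<lambda>x y. X (a, x) (b, y)))"
proof -
  have "cnj (TT B M (\<lambda>x y. X (a, x) (b, y))) = (\<Sum>x\<in>B. \<Sum>y\<in>B. cnj (M x y) * cnj (X (a, y) (b, x)))"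
    unfolding TT_def by simp
  also have "\<dots> = (\<Sum>x\<in>B. \<Sum>y\<in>B. M y x * X (b, x) (a, y))"
  proof (intro sum.cong refl)
    fix x y assume xB: "x \<in> B" and yB: "y \<in> B"
    have m1: "M y x = cnj (M x y)" by (rule hermD[OF assms(1) xB yB])
    have m2: "X (b, x) (a, y) = cnj (X (a, y) (b, x))"
      by (rule hermD[OF assms(2)]) (simp_all add: assms(3,4) xB yB)
    from m1 m2 show "cnj (M x y) * cnj (X (a, y) (b, x)) = M y x * X (b, x) (a, y)" by simp
  qed
  also have "\<dots> = TT B M (\<lambda>x y. X (b, x) (a, y))"
    unfolding TT_def by (rule sum.swap)
  finally show ?thesis by simp
qed

lemma block_pos:
  assumes "finite B" "herm B M" "ddom B M" "psd ({..<k} \<times> B) X"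
  shows "Im (\<Sum>a<k. \<Sum>b<k. cnj (w a) * TT B M (\<lambda>x y. X (a, x) (b, y)) * w b) = 0 \<and>
         Re (\<Sum>a<k. \<Sum>b<k. cnj (w a) * TT B M (\<lambda>x y. X (a, x) (b, y)) * w b) \<ge> 0"
proof -
  have hX: "herm ({..<k} \<times> B) X" and qX: "qpos ({..<k} \<times> B) X" using assms(4) unfolding psd_iff by auto
  define G where "G = (\<lambda>y x. \<Sum>a<k. \<Sum>b<k. cnj (w a) * X (a, y) (b, x) * w b)"
  have e: "(\<Sum>a<k. \<Sum>b<k. cnj (w a) * TT B M (\<lambda>x y. X (a, x) (b, y)) * w b)
      = (\<Sum>x\<in>B. \<Sum>y\<in>B. M x y * G y x)"
  proof -
    have "(\<Sum>a<k. \<Sum>b<k. cnj (w a) * TT B M (\<lambda>x y. X (a, x) (b, y)) * w b)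
        = (\<Sum>a<k. \<Sum>b<k. \<Sum>x\<in>B. \<Sum>y\<in>B. M x y * (cnj (w a) * X (a, y) (b, x) * w b))"
      unfolding TT_def by (simp add: sum_distrib_left sum_distrib_right mult.commute mult.left_commute)
    also have "\<dots> = (\<Sum>x\<in>B. \<Sum>y\<in>B. \<Sum>a<k. \<Sum>b<k. M x y * (cnj (w a) * X (a, y) (b, x) * w b))"
      by (rule swap4)
    also have "\<dots> = (\<Sum>x\<in>B. \<Sum>y\<in>B. M x y * G y x)"
      unfolding G_def by (simp add: sum_distrib_left)
    finally show ?thesis .
  qed
  have hG: "herm B G"
    unfolding herm_def
  proof (intro ballI)
    fix x y assume xB2: "x \<in> B" and yB2: "y \<in> B"
    have "cnj (G x y) = (\<Sum>a<k. \<Sum>b<k. w a * cnj (X (a, x) (b, y)) * cnj (w b))"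
      unfolding G_def by simp
    also have "\<dots> = (\<Sum>a<k. \<Sum>b<k. w a * X (b, y) (a, x) * cnj (w b))"
    proof (intro sum.cong refl)
      fix a b assume ak: "a \<in> {..<k}" and bk: "b \<in> {..<k}"
      have "X (b, y) (a, x) = cnj (X (a, x) (b, y))"
        by (rule hermD[OF hX]) (insert ak bk xB2 yB2, simp_all)
      then show "w a * cnj (X (a, x) (b, y)) * cnj (w b) = w a * X (b, y) (a, x) * cnj (w b)" by simp
    qed
    also have "\<dots> = (\<Sum>b<k. \<Sum>a<k. w a * X (b, y) (a, x) * cnj (w b))" by (rule sum.swap)
    also have "\<dots> = G y x" unfolding G_def by (simp add: mult.commute mult.left_commute)
    finally show "G y x = cnj (G x y)" by simp
  qed
  have qG: "qpos B G"
    unfolding qpos_def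
  proof
    fix z :: "'a \<Rightarrow> complex"
    define V where "V = (\<lambda>p. w (fst p) * z (snd p))"
    have "(\<Sum>i\<in>B. \<Sum>j\<in>B. cnj (z i) * G i j * z j)
        = (\<Sum>i\<in>B. \<Sum>j\<in>B. \<Sum>a<k. \<Sum>b<k. cnj (V (a, i)) * X (a, i) (b, j) * V (b, j))"
      unfolding G_def V_def by (simp add: sum_distrib_left sum_distrib_right mult_ac)
    also have "\<dots> = (\<Sum>a<k. \<Sum>b<k. \<Sum>i\<in>B. \<Sum>j\<in>B. cnj (V (a, i)) * X (a, i) (b, j) * V (b, j))"
      by (rule swap4)
    also have "\<dots> = (\<Sum>a<k. \<Sum>i\<in>B. \<Sum>b<k. \<Sum>j\<in>B. cnj (V (a, i)) * X (a, i) (b, j) * V (b, j))"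
      by (intro sum.cong refl, rule sum.swap)
    also have "\<dots> = (\<Sum>p\<in>{..<k} \<times> B. \<Sum>q\<in>{..<k} \<times> B. cnj (V p) * X p q * V q)"
      by (simp only: sum.cartesian_product')
    finally have eq: "(\<Sum>i\<in>B. \<Sum>j\<in>B. cnj (z i) * G i j * z j)
        = (\<Sum>p\<in>{..<k} \<times> B. \<Sum>q\<in>{..<k} \<times> B. cnj (V p) * X p q * V q)" .
    have "Im (\<Sum>p\<in>{..<k} \<times> B. \<Sum>q\<in>{..<k} \<times> B. cnj (V p) * X p q * V q) = 0 \<and>
          Re (\<Sum>p\<in>{..<k} \<times> B. \<Sum>q\<in>{..<k} \<times> B. cnj (V p) * X p q * V q) \<ge> 0"
      using qX unfolding qpos_def by blast
    then show "Im (\<Sum>i\<in>B. \<Sum>j\<in>B. cnj (z i) * G i j * z j) = 0 \<and>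
               Re (\<Sum>i\<in>B. \<Sum>j\<in>B. cnj (z i) * G i j * z j) \<ge> 0" unfolding eq .
  qed
  show ?thesis unfolding e by (rule trace_pos[OF assms(1) hG qG assms(2,3)])
qed



lemma sum2: "(\<Sum>s<(2::nat). g s) = g 0 + g 1"
  by (simp add: numeral_2_eq_2)

lemma channel_mp:
  assumes fin: "finite B" and hA: "herm B A" "ddom B A" and hI: "herm B (Ic A)" "ddom B (Ic A)"
  shows "channel B 2 (mp B A)"
  unfolding channel_def
proof (intro conjI allI impI)
  fix X Y :: "_ \<Rightarrow> _ \<Rightarrow> complex" and c
  show "mp B A (\<lambda>i j. c * X i j + Y i j) = (\<lambda>i j. c * mp B A X i j + mp B A Y i j)"
    by (rule ext)+ (simp add: mp_def TT_lin)
next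
  fix X :: "_ \<Rightarrow> _ \<Rightarrow> complex"
  show "op_on {..<2} (mp B A X)" unfolding op_on_def mp_def by auto
next
  fix X :: "_ \<Rightarrow> _ \<Rightarrow> complex"
  have "tr {..<2} (mp B A X) = mp B A X 0 0 + mp B A X 1 1" unfolding tr_def by (rule sum2)
  also have "\<dots> = TT B A X + TT B (Ic A) X" by (simp add: mp_def)
  also have "\<dots> = tr B X" by (rule TT_Ic[OF fin])
  finally show "tr {..<2} (mp B A X) = tr B X" .
next
  fix k :: nat and X
  assume pX: "psd ({..<k} \<times> B) X"
  have oX: "op_on ({..<k} \<times> B) X" and hX: "herm ({..<k} \<times> B) X" using pX unfolding psd_iff by auto
  let ?S = "{..<k} \<times> {..<2::nat}"
  let ?Y = "\<lambda>u w. mp B A (\<lambda>x y. X (fst u, x) (fst w, y)) (snd u) (snd w)"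
  have z: "TT B M (\<lambda>x y. X (a, x) (b, y)) = 0" if "\<not> a < k \<or> \<not> b < k" for M a b
  proof (rule TT_zero, intro ballI)
    fix x y assume "x \<in> B" "y \<in> B"
    show "X (a, y) (b, x) = 0" using oX that unfolding op_on_def by auto
  qed
  have op: "op_on ?S ?Y"
    unfolding op_on_def
  proof (intro allI impI)
    fix u w :: "nat \<times> nat"
    assume uw: "u \<notin> ?S \<or> w \<notin> ?S"
    obtain a s where u: "u = (a, s)" by (cases u)
    obtain b t where w: "w = (b, t)" by (cases w)
    show "?Y u w = 0"
    proof (cases "s < 2 \<and> t < 2")
      case True
      then have "\<not> a < k \<or> \<not> b < k" using uw u w by auto
      then show ?thesis using z[of a b A] z[of a b "Ic A"] u w by (simp add: mp_def)
    next
      case False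
      then show ?thesis using u w by (auto simp: mp_def)
    qed
  qed
  have he: "herm ?S ?Y"
    unfolding herm_def
  proof (intro ballI)
    fix u w assume uS: "u \<in> ?S" and wS: "w \<in> ?S"
    obtain a s where u: "u = (a, s)" by (cases u)
    obtain b t where w: "w = (b, t)" by (cases w)
    have ak: "a < k" and bk: "b < k" using uS wS u w by auto
    show "?Y w u = cnj (?Y u w)"
      using TT_block_herm[OF hA(1) hX ak bk] TT_block_herm[OF hI(1) hX ak bk] u w
      by (simp add: mp_def)
  qed
  have qp: "qpos ?S ?Y"
    unfolding qpos_def
  proof
    fix v :: "nat \<times> nat \<Rightarrow> complex"
    let ?Q = "\<lambda>M s. (\<Sum>a<k. \<Sum>b<k. cnj (v (a, s)) * TT B M (\<lambda>x y. X (a, x) (b, y)) * v (b, s))"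
    have "(\<Sum>u\<in>?S. \<Sum>w\<in>?S. cnj (v u) * ?Y u w * v w)
       = (\<Sum>a<k. \<Sum>s<2. \<Sum>b<k. \<Sum>t<2. cnj (v (a, s)) * ?Y (a, s) (b, t) * v (b, t))"
      by (simp only: sum.cartesian_product')
    also have "\<dots> = (\<Sum>a<k. (\<Sum>b<k. cnj (v (a, 0)) * TT B A (\<lambda>x y. X (a, x) (b, y)) * v (b, 0))
                         + (\<Sum>b<k. cnj (v (a, 1)) * TT B (Ic A) (\<lambda>x y. X (a, x) (b, y)) * v (b, 1)))"
      by (simp add: sum2 mp_def)
    also have "\<dots> = ?Q A 0 + ?Q (Ic A) 1" by (simp add: sum.distrib)
    finally have eq: "(\<Sum>u\<in>?S. \<Sum>w\<in>?S. cnj (v u) * ?Y u w * v w) = ?Q A 0 + ?Q (Ic A) 1" .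
    have q1: "Im (?Q A 0) = 0 \<and> Re (?Q A 0) \<ge> 0"
      using block_pos[OF fin hA pX, of "\<lambda>a. v (a, 0)"] by simp
    have q2: "Im (?Q (Ic A) 1) = 0 \<and> Re (?Q (Ic A) 1) \<ge> 0"
      using block_pos[OF fin hI pX, of "\<lambda>a. v (a, 1)"] by simp
    show "Im (\<Sum>u\<in>?S. \<Sum>w\<in>?S. cnj (v u) * ?Y u w * v w) = 0 \<and>
          Re (\<Sum>u\<in>?S. \<Sum>w\<in>?S. cnj (v u) * ?Y u w * v w) \<ge> 0"
      unfolding eq using q1 q2 by simp
  qed
  show "psd ?S ?Y" unfolding psd_iff using op he qp by blast
qed



definition LL :: "'b set \<Rightarrow> ('b \<Rightarrow> 'b \<Rightarrow> complex) \<Rightarrow> nat \<Rightarrow> ('b \<Rightarrow> 'b \<Rightarrow> complex) \<Rightarrow> nat \<Rightarrow> nat \<Rightarrow> complex" where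
  "LL B A i = (if i = 0 then mp B A else mp B dl)"

lemma TT_dl: assumes "finite B" shows "TT B dl X = tr B X"
proof -
  have "TT B dl X = (\<Sum>x\<in>B. X x x)"
    unfolding TT_def
  proof (rule sum.cong[OF refl])
    fix x assume x: "x \<in> B"
    have "(\<Sum>y\<in>B. dl x y * X y x) = dl x x * X x x"
      by (rule one_sum[OF assms x]) (simp add: dl_diff)
    then show "(\<Sum>y\<in>B. dl x y * X y x) = X x x" by (simp add: dl_same)
  qed
  then show ?thesis unfolding tr_def .
qed

lemma perr_formula:
  assumes fin: "finite B" and g: "TT B A \<omega> = of_real r" and t: "tr B \<omega> = 1"
  shows "perr 2 2 (\<lambda>_. 1/2) (LL B A) M \<omega> = (r * Re (M 0 0 0) + (1 - r) * Re (M 0 1 1) + Re (M 1 0 0)) / 2"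
proof -
  have h: "TT B A \<omega> + TT B (Ic A) \<omega> = 1" using TT_Ic[OF fin, of A \<omega>] t by simp
  have "TT B (Ic A) \<omega> = 1 - TT B A \<omega>" using h by (metis add_diff_cancel_left')
  then have g2: "TT B (Ic A) \<omega> = of_real (1 - r)" using g by simp
  have d1: "TT B dl \<omega> = 1" using TT_dl[OF fin] t by simp
  have d2: "TT B (Ic dl) \<omega> = 0" using TT_Ic[OF fin, of dl \<omega>] d1 t by simp
  show ?thesis
    unfolding perr_def sum2 LL_def
    by (simp add: mp_def g g2 d1 d2 field_simps)
qed

definition Mopt :: "nat \<Rightarrow> nat \<Rightarrow> nat \<Rightarrow> complex" where
  "Mopt i a b = (if a = b \<and> a = i then 1 else 0)"

lemma Mopt_povm: "povm 2 2 Mopt"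
  unfolding povm_def
proof (intro conjI allI impI)
  fix i :: nat assume i: "i < 2"
  show "psd {..<2} (Mopt i)"
    unfolding psd_iff
  proof (intro conjI)
    show "op_on {..<2} (Mopt i)" unfolding op_on_def Mopt_def using i by auto
    show "herm {..<2} (Mopt i)" unfolding herm_def Mopt_def by auto
    show "qpos {..<2} (Mopt i)"
      unfolding qpos_def
    proof
      fix v :: "nat \<Rightarrow> complex"
      have "(\<Sum>a<2. \<Sum>b<2. cnj (v a) * Mopt i a b * v b) = cnj (v i) * v i"
        using i by (cases i) (auto simp: sum2 Mopt_def)
      also have "\<dots> = of_real ((cmod (v i))^2)" by (simp add: zcnj mult.commute)
      finally show "Im (\<Sum>a<2. \<Sum>b<2. cnj (v a) * Mopt i a b * v b) = 0 \<and>
                    Re (\<Sum>a<2. \<Sum>b<2. cnj (v a) * Mopt i a b * v b) \<ge> 0" by simp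
    qed
  qed
next
  fix a b :: nat
  show "(\<Sum>i<2. Mopt i a b) = (if a = b \<and> a < 2 then 1 else 0)"
    by (auto simp: sum2 Mopt_def)
qed

lemma minerr_formula:
  assumes fin: "finite B" and g: "TT B A \<omega> = of_real r" and t: "tr B \<omega> = 1"
    and r0: "0 \<le> r" and r1: "r \<le> 1"
  shows "minerr 2 2 (\<lambda>_. 1/2) (LL B A) \<omega> = r / 2"
  unfolding minerr_def
proof (rule cInf_eq_minimum)
  have "perr 2 2 (\<lambda>_. 1/2) (LL B A) Mopt \<omega> = r / 2"
    unfolding perr_formula[OF fin g t] by (simp add: Mopt_def)
  then show "r / 2 \<in> {perr 2 2 (\<lambda>_. 1/2) (LL B A) M \<omega> |M. povm 2 2 M}"
    using Mopt_povm by force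
next
  fix x assume "x \<in> {perr 2 2 (\<lambda>_. 1/2) (LL B A) M \<omega> |M. povm 2 2 M}"
  then obtain M where x: "x = perr 2 2 (\<lambda>_. 1/2) (LL B A) M \<omega>" and P: "povm 2 2 M" by blast
  have p0: "psd {..<2} (M 0)" and p1: "psd {..<2} (M 1)" using P unfolding povm_def by auto
  have q0: "qpos {..<2} (M 0)" and q1: "qpos {..<2} (M 1)" using p0 p1 unfolding psd_iff by auto
  have m11: "Re (M 0 1 1) \<ge> 0" using diag_nonneg[OF _ q0, of 1] by simp
  have n00: "Re (M 1 0 0) \<ge> 0" using diag_nonneg[OF _ q1, of 0] by simp
  have s: "(\<Sum>i<2. M i 0 0) = 1" using P unfolding povm_def by (metis less_numeral_extra(1) pos2)
  then have "M 0 0 0 + M 1 0 0 = 1" by (simp add: sum2)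
  then have e: "Re (M 1 0 0) = 1 - Re (M 0 0 0)" by (metis Re_complex_of_real add_diff_cancel_left' minus_complex.sel one_complex.sel)
  have a: "(1 - r) * Re (M 0 1 1) \<ge> 0" using r1 m11 by simp
  have b: "(1 - r) * Re (M 0 0 0) \<le> (1 - r) * 1" using r1 n00 e by (intro mult_left_mono) auto
  show "r / 2 \<le> x" unfolding x perr_formula[OF fin g t] using a b e by (simp add: field_simps)
qed



lemma dlL: "dl x y * (t::complex) = (if x = y then t else 0)" by (simp add: dl_def)
lemma dlR: "(t::complex) * dl x y = (if x = y then t else 0)" by (simp add: dl_def)
lemma sumIf: "(\<Sum>u\<in>S. if P then h u else (0::complex)) = (if P then (\<Sum>u\<in>S. h u) else 0)" by simp
lemma ifL: "(if P then a else 0) * (t::complex) = (if P then a * t else 0)" by simp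
lemma ifR: "(t::complex) * (if P then a else 0) = (if P then t * a else 0)" by simp

lemma dl_sym: "dl x y = dl y x" by (auto simp: dl_def)
lemma dl_cnj: "cnj (dl x y) = dl x y" by (simp add: dl_def)
lemma dl_cmod: "cmod (dl x y) = Re (dl x y)" by (simp add: dl_def)
lemma dl_cmod_le: "cmod (dl x y) \<le> 1" by (simp add: dl_def)

lemma herm_dl: "herm B dl" unfolding herm_def by (auto simp: dl_def)
lemma ddom_dl: assumes "finite B" shows "ddom B dl"
  unfolding ddom_def
proof
  fix x assume x: "x \<in> B"
  have "(\<Sum>y\<in>B. cmod (dl x y)) = cmod (dl x x)"
    by (rule one_sum[OF assms x]) (simp add: dl_def)
  then show "(\<Sum>y\<in>B. cmod (dl x y)) \<le> 2 * Re (dl x x)" by (simp add: dl_def)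
qed
lemma Ic_dl: "Ic dl = (\<lambda>x y. 0)" unfolding Ic_def by simp
lemma Ic_zero: "Ic (\<lambda>x y. 0) = dl" unfolding Ic_def by simp
lemma herm_zero: "herm B (\<lambda>x y. 0)" unfolding herm_def by simp
lemma ddom_zero: "ddom B (\<lambda>x y. 0)" unfolding ddom_def by simp

lemma herm_Ic: assumes "herm B A" shows "herm B (Ic A)"
  unfolding herm_def Ic_def
proof (intro ballI)
  fix x y assume "x \<in> B" "y \<in> B"
  then have "A y x = cnj (A x y)" by (rule hermD[OF assms])
  then show "dl y x - A y x = cnj (dl x y - A x y)" by (simp add: dl_cnj dl_sym)
qed

lemma words_eq: "words m = {xs. set xs \<subseteq> (UNIV :: 'n set) \<and> length xs = m}"
  unfolding words_def by simp
lemma finite_words: "finite (words m :: 'n::finite list set)"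
  unfolding words_eq by (rule finite_lists_length_eq) simp
lemma card_words: "card (words m :: 'n::finite list set) = CARD('n) ^ m"
  unfolding words_eq by (rule card_lists_length_eq) simp

lemma words2_img: "words 2 = (\<lambda>p. [fst p, snd p]) ` (UNIV :: ('n \<times> 'n) set)"
proof
  show "words 2 \<subseteq> (\<lambda>p. [fst p, snd p]) ` (UNIV :: ('n \<times> 'n) set)"
  proof
    fix xs :: "'n list" assume "xs \<in> words 2"
    then have "length xs = 2" by (simp add: words_def)
    then obtain a b where "xs = [a, b]" by (auto simp: numeral_2_eq_2 length_Suc_conv)
    then show "xs \<in> (\<lambda>p. [fst p, snd p]) ` UNIV" by (auto intro: image_eqI[of _ _ "(a, b)"])
  qed
  show "(\<lambda>p. [fst p, snd p]) ` (UNIV :: ('n \<times> 'n) set) \<subseteq> words 2"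
    by (auto simp: words_def)
qed

lemma sum_words2: "(\<Sum>xs\<in>words 2. f xs) = (\<Sum>a\<in>(UNIV::'n::finite set). \<Sum>b\<in>UNIV. f [a, b])"
proof -
  have inj: "inj_on (\<lambda>p. [fst p, snd p]) (UNIV :: ('n \<times> 'n) set)"
    by (rule inj_onI) (auto simp: prod_eq_iff)
  have "(\<Sum>xs\<in>words 2. f xs) = (\<Sum>p\<in>(UNIV :: ('n \<times> 'n) set). f [fst p, snd p])"
    unfolding words2_img by (simp add: sum.reindex[OF inj])
  also have "\<dots> = (\<Sum>a\<in>(UNIV::'n set). \<Sum>b\<in>UNIV. f [a, b])"
    unfolding UNIV_Times_UNIV[symmetric] sum.cartesian_product' by simp
  finally show ?thesis .
qed

lemma tpow2: "tpow 2 s [a, b] [c, d] = s a c * s b d"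
  by (simp add: tpow_def numeral_2_eq_2)

lemma dl2: "dl [a, b] [c, d] = dl a c * dl b d"
  by (simp add: dl_def)

lemma dens_facts:
  fixes s :: "'n::finite \<Rightarrow> 'n \<Rightarrow> complex"
  assumes "density UNIV s"
  shows "herm UNIV s" "qpos UNIV s" "(\<Sum>i\<in>UNIV. s i i) = 1"
    "\<And>i. Im (s i i) = 0" "\<And>i. Re (s i i) \<ge> 0" "\<And>i. Re (s i i) \<le> 1" "\<And>i j. cmod (s i j) \<le> 1"
    "\<And>i j. s j i = cnj (s i j)"
proof -
  show h: "herm UNIV s" and q: "qpos UNIV s" using assms unfolding density_def psd_iff by blast+
  show t: "(\<Sum>i\<in>UNIV. s i i) = 1" using assms unfolding density_def tr_def by auto
  show im: "Im (s i i) = 0" and re: "Re (s i i) \<ge> 0" for i using diag_nonneg[OF finite_class.finite_UNIV q, of i] by auto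
  show le: "Re (s i i) \<le> 1" for i
  proof -
    have "Re (s i i) \<le> (\<Sum>j\<in>UNIV. Re (s j j))"
      by (rule member_le_sum) (auto simp: re)
    also have "\<dots> = Re (\<Sum>j\<in>UNIV. s j j)" by (simp add: Re_sum)
    finally show ?thesis using t by simp
  qed
  show "cmod (s i j) \<le> 1" for i j
    using offdiag_bound[OF finite_class.finite_UNIV h q, of i j] le[of i] le[of j] by simp
  show "s j i = cnj (s i j)" for i j by (rule hermD[OF h]) simp_all
qed



definition A2 :: "('n \<Rightarrow> 'n \<Rightarrow> complex) \<Rightarrow> real \<Rightarrow> real \<Rightarrow> 'n list \<Rightarrow> 'n list \<Rightarrow> complex" where
  "A2 r kk KK xs ys = (of_real kk * dl xs ys + dl (xs!0) (ys!1) * dl (xs!1) (ys!0)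
      - r (xs!0) (ys!0) * dl (xs!1) (ys!1) - dl (xs!0) (ys!0) * r (xs!1) (ys!1)) / of_real KK"

lemma g_formula:
  fixes s r :: "'n::finite \<Rightarrow> 'n \<Rightarrow> complex"
  assumes t: "(\<Sum>i\<in>UNIV. s i i) = 1"
  shows "TT (words 2) (A2 r kk KK) (tpow 2 s) =
    (of_real kk + (\<Sum>a\<in>UNIV. \<Sum>b\<in>UNIV. s a b * s b a) - 2 * (\<Sum>a\<in>UNIV. \<Sum>b\<in>UNIV. r a b * s b a)) / of_real KK"
proof -
  let ?U = "UNIV :: 'n set"
  define t1 where "t1 = (\<lambda>a b c d. dl a c * dl b d * (s c a * s d b))"
  define t2 where "t2 = (\<lambda>a b c d. dl a d * dl b c * (s c a * s d b))"
  define t3 where "t3 = (\<lambda>a b c d. r a c * dl b d * (s c a * s d b))"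
  define t4 where "t4 = (\<lambda>a b c d. dl a c * r b d * (s c a * s d b))"
  have "TT (words 2) (A2 r kk KK) (tpow 2 s) =
      (\<Sum>a\<in>?U. \<Sum>b\<in>?U. \<Sum>c\<in>?U. \<Sum>d\<in>?U. A2 r kk KK [a, b] [c, d] * (s c a * s d b))"
    unfolding TT_def by (simp only: sum_words2 tpow2)
  also have "\<dots> = (\<Sum>a\<in>?U. \<Sum>b\<in>?U. \<Sum>c\<in>?U. \<Sum>d\<in>?U.
         (of_real kk * t1 a b c d + t2 a b c d - t3 a b c d - t4 a b c d) / of_real KK)"
    by (intro sum.cong refl) (simp add: A2_def dl2 t1_def t2_def t3_def t4_def field_simps)
  also have "\<dots> = (of_real kk * (\<Sum>a\<in>?U. \<Sum>b\<in>?U. \<Sum>c\<in>?U. \<Sum>d\<in>?U. t1 a b c d)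
         + (\<Sum>a\<in>?U. \<Sum>b\<in>?U. \<Sum>c\<in>?U. \<Sum>d\<in>?U. t2 a b c d)
         - (\<Sum>a\<in>?U. \<Sum>b\<in>?U. \<Sum>c\<in>?U. \<Sum>d\<in>?U. t3 a b c d)
         - (\<Sum>a\<in>?U. \<Sum>b\<in>?U. \<Sum>c\<in>?U. \<Sum>d\<in>?U. t4 a b c d)) / of_real KK"
    by (simp only: sum_divide_distrib[symmetric] sum_subtractf sum.distrib sum_distrib_left)
  also have "(\<Sum>a\<in>?U. \<Sum>b\<in>?U. \<Sum>c\<in>?U. \<Sum>d\<in>?U. t1 a b c d) = 1"
  proof -
    have "(\<Sum>a\<in>?U. \<Sum>b\<in>?U. \<Sum>c\<in>?U. \<Sum>d\<in>?U. t1 a b c d) = (\<Sum>a\<in>?U. \<Sum>b\<in>?U. s a a * s b b)"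
      unfolding t1_def by (simp add: dlL dlR ifL ifR sumIf)
    also have "\<dots> = (\<Sum>a\<in>?U. s a a) * (\<Sum>b\<in>?U. s b b)" by (simp add: sum_product)
    finally show ?thesis using t by simp
  qed
  also have "(\<Sum>a\<in>?U. \<Sum>b\<in>?U. \<Sum>c\<in>?U. \<Sum>d\<in>?U. t2 a b c d) = (\<Sum>a\<in>?U. \<Sum>b\<in>?U. s a b * s b a)"
  proof -
    have "(\<Sum>a\<in>?U. \<Sum>b\<in>?U. \<Sum>c\<in>?U. \<Sum>d\<in>?U. t2 a b c d) = (\<Sum>a\<in>?U. \<Sum>b\<in>?U. s b a * s a b)"
      unfolding t2_def by (simp add: dlL dlR ifL ifR sumIf)
    then show ?thesis by (simp add: mult.commute)
  qed
  also have "(\<Sum>a\<in>?U. \<Sum>b\<in>?U. \<Sum>c\<in>?U. \<Sum>d\<in>?U. t3 a b c d) = (\<Sum>a\<in>?U. \<Sum>b\<in>?U. r a b * s b a)"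
  proof -
    have "(\<Sum>a\<in>?U. \<Sum>b\<in>?U. \<Sum>c\<in>?U. \<Sum>d\<in>?U. t3 a b c d) = (\<Sum>a\<in>?U. \<Sum>b\<in>?U. \<Sum>c\<in>?U. r a c * (s c a * s b b))"
      unfolding t3_def by (simp add: dlL dlR ifL ifR sumIf)
    also have "\<dots> = (\<Sum>a\<in>?U. \<Sum>c\<in>?U. \<Sum>b\<in>?U. r a c * (s c a * s b b))"
      by (rule sum.cong[OF refl], rule sum.swap)
    also have "\<dots> = (\<Sum>a\<in>?U. \<Sum>c\<in>?U. r a c * s c a * (\<Sum>b\<in>?U. s b b))"
      by (simp add: sum_distrib_left mult.assoc)
    finally show ?thesis using t by simp
  qed
  also have "(\<Sum>a\<in>?U. \<Sum>b\<in>?U. \<Sum>c\<in>?U. \<Sum>d\<in>?U. t4 a b c d) = (\<Sum>a\<in>?U. \<Sum>b\<in>?U. r a b * s b a)"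
  proof -
    have "(\<Sum>a\<in>?U. \<Sum>b\<in>?U. \<Sum>c\<in>?U. \<Sum>d\<in>?U. t4 a b c d) = (\<Sum>a\<in>?U. \<Sum>b\<in>?U. \<Sum>d\<in>?U. s a a * (r b d * s d b))"
      unfolding t4_def by (simp add: dlL dlR ifL ifR sumIf mult_ac)
    also have "\<dots> = (\<Sum>a\<in>?U. s a a * (\<Sum>b\<in>?U. \<Sum>d\<in>?U. r b d * s d b))"
      by (simp add: sum_distrib_left)
    also have "\<dots> = (\<Sum>a\<in>?U. s a a) * (\<Sum>b\<in>?U. \<Sum>d\<in>?U. r b d * s d b)"
      by (simp add: sum_distrib_right)
    finally show ?thesis using t by simp
  qed
  finally show ?thesis by simp
qed



lemma sum_Re_dl: assumes "finite W" "x \<in> W" shows "(\<Sum>y\<in>W. Re (dl x y)) = 1"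
proof -
  have "(\<Sum>y\<in>W. Re (dl x y)) = Re (dl x x)"
    by (rule one_sum[OF assms]) (simp add: dl_def)
  then show ?thesis by (simp add: dl_def)
qed

lemma ddom_crit:
  assumes fin: "finite W" and K: "KK > 0" and c: "c + 3 * real (card W) \<le> 2 * (c - 2)"
    and pw: "\<And>xs ys. xs \<in> W \<Longrightarrow> ys \<in> W \<Longrightarrow> cmod (M xs ys) \<le> (c * Re (dl xs ys) + 3) / KK"
    and dg: "\<And>xs. xs \<in> W \<Longrightarrow> Re (M xs xs) \<ge> (c - 2) / KK"
  shows "ddom W M"
  unfolding ddom_def
proof
  fix xs assume xs: "xs \<in> W"
  have "(\<Sum>ys\<in>W. cmod (M xs ys)) \<le> (\<Sum>ys\<in>W. (c * Re (dl xs ys) + 3) / KK)"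
    by (rule sum_mono) (rule pw[OF xs])
  also have "\<dots> = (c * (\<Sum>ys\<in>W. Re (dl xs ys)) + 3 * real (card W)) / KK"
    by (simp add: sum_divide_distrib[symmetric] sum.distrib sum_distrib_left)
  also have "\<dots> = (c + 3 * real (card W)) / KK" using sum_Re_dl[OF fin xs] by simp
  also have "\<dots> \<le> 2 * ((c - 2) / KK)" using c K by (simp add: divide_right_mono)
  also have "\<dots> \<le> 2 * Re (M xs xs)" using dg[OF xs] by linarith
  finally show "(\<Sum>ys\<in>W. cmod (M xs ys)) \<le> 2 * Re (M xs xs)" .
qed

lemma A2_herm:
  assumes rh: "\<And>i j. r j i = cnj (r i j)"
  shows "herm B (A2 r kk KK)"
  unfolding herm_def
proof (intro ballI)
  fix xs ys :: "'a list"
  have e1: "r (ys!0) (xs!0) = cnj (r (xs!0) (ys!0))" by (rule rh)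
  have e2: "r (ys!1) (xs!1) = cnj (r (xs!1) (ys!1))" by (rule rh)
  show "A2 r kk KK ys xs = cnj (A2 r kk KK xs ys)"
  proof -
    have d: "dl ys xs = dl xs ys" "dl (ys!0) (xs!1) = dl (xs!1) (ys!0)" "dl (ys!1) (xs!0) = dl (xs!0) (ys!1)"
      "dl (ys!1) (xs!1) = dl (xs!1) (ys!1)" "dl (ys!0) (xs!0) = dl (xs!0) (ys!0)" by (rule dl_sym)+
    show ?thesis unfolding A2_def e1 e2 d by (simp add: dl_cnj mult_ac)
  qed
qed

lemma A2_pw:
  assumes rb: "\<And>i j. cmod (r i j) \<le> 1" and K: "KK > 0" and k: "kk \<ge> 0"
  shows "cmod (A2 r kk KK xs ys) \<le> (kk * Re (dl xs ys) + 3) / KK"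
proof -
  have "cmod (of_real kk * dl xs ys + dl (xs!0) (ys!1) * dl (xs!1) (ys!0)
      - r (xs!0) (ys!0) * dl (xs!1) (ys!1) - dl (xs!0) (ys!0) * r (xs!1) (ys!1))
    \<le> cmod (of_real kk * dl xs ys) + cmod (dl (xs!0) (ys!1) * dl (xs!1) (ys!0))
      + cmod (r (xs!0) (ys!0) * dl (xs!1) (ys!1)) + cmod (dl (xs!0) (ys!0) * r (xs!1) (ys!1))"
    by (rule order_trans[OF norm_triangle_ineq4] add_mono order_trans[OF norm_triangle_ineq4]
        order_trans[OF norm_triangle_ineq] order_refl)+
  also have "\<dots> \<le> kk * Re (dl xs ys) + 1 + 1 + 1"
  proof (intro add_mono)
    show "cmod (of_real kk * dl xs ys) \<le> kk * Re (dl xs ys)" using k by (simp add: norm_mult dl_cmod)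
    show "cmod (dl (xs!0) (ys!1) * dl (xs!1) (ys!0)) \<le> 1"
      by (simp add: norm_mult dl_def)
    show "cmod (r (xs!0) (ys!0) * dl (xs!1) (ys!1)) \<le> 1"
      using rb[of "xs!0" "ys!0"] dl_cmod_le[of "xs!1" "ys!1"] by (simp add: norm_mult mult_le_one)
    show "cmod (dl (xs!0) (ys!0) * r (xs!1) (ys!1)) \<le> 1"
      using rb[of "xs!1" "ys!1"] dl_cmod_le[of "xs!0" "ys!0"] by (simp add: norm_mult mult_le_one)
  qed
  finally show ?thesis unfolding A2_def using K by (simp add: norm_divide divide_right_mono)
qed

lemma IcA2_pw:
  assumes rb: "\<And>i j. cmod (r i j) \<le> 1" and K: "KK > 0" and k: "kk \<le> KK"
  shows "cmod (Ic (A2 r kk KK) xs ys) \<le> ((KK - kk) * Re (dl xs ys) + 3) / KK"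
proof -
  have eq: "Ic (A2 r kk KK) xs ys = (of_real (KK - kk) * dl xs ys - dl (xs!0) (ys!1) * dl (xs!1) (ys!0)
      + r (xs!0) (ys!0) * dl (xs!1) (ys!1) + dl (xs!0) (ys!0) * r (xs!1) (ys!1)) / of_real KK"
    unfolding Ic_def A2_def using K by (simp add: field_simps)
  have "cmod (of_real (KK - kk) * dl xs ys - dl (xs!0) (ys!1) * dl (xs!1) (ys!0)
      + r (xs!0) (ys!0) * dl (xs!1) (ys!1) + dl (xs!0) (ys!0) * r (xs!1) (ys!1))
    \<le> cmod (of_real (KK - kk) * dl xs ys) + cmod (dl (xs!0) (ys!1) * dl (xs!1) (ys!0))
      + cmod (r (xs!0) (ys!0) * dl (xs!1) (ys!1)) + cmod (dl (xs!0) (ys!0) * r (xs!1) (ys!1))"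
    by (rule order_trans[OF norm_triangle_ineq] add_mono order_trans[OF norm_triangle_ineq]
        order_trans[OF norm_triangle_ineq4] order_refl)+
  also have "\<dots> \<le> (KK - kk) * Re (dl xs ys) + 1 + 1 + 1"
  proof (intro add_mono)
    show "cmod (of_real (KK - kk) * dl xs ys) \<le> (KK - kk) * Re (dl xs ys)" using k by (simp del: of_real_diff add: norm_mult dl_cmod)
    show "cmod (dl (xs!0) (ys!1) * dl (xs!1) (ys!0)) \<le> 1"
      by (simp add: norm_mult dl_def)
    show "cmod (r (xs!0) (ys!0) * dl (xs!1) (ys!1)) \<le> 1"
      using rb[of "xs!0" "ys!0"] dl_cmod_le[of "xs!1" "ys!1"] by (simp add: norm_mult mult_le_one)
    show "cmod (dl (xs!0) (ys!0) * r (xs!1) (ys!1)) \<le> 1"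
      using rb[of "xs!1" "ys!1"] dl_cmod_le[of "xs!0" "ys!0"] by (simp add: norm_mult mult_le_one)
  qed
  finally show ?thesis unfolding eq using K by (simp add: norm_divide divide_right_mono)
qed

lemma A2_diag:
  assumes r1: "\<And>i. Re (r i i) \<le> 1" and K: "KK > 0"
  shows "Re (A2 r kk KK [a, b] [a, b]) \<ge> (kk - 2) / KK"
proof -
  have "Re (A2 r kk KK [a, b] [a, b]) = (kk + Re (dl a b * dl b a) - Re (r a a) - Re (r b b)) / KK"
    unfolding A2_def by (simp add: dl_def)
  moreover have "Re (dl a b * dl b a) \<ge> 0" by (simp add: dl_def)
  ultimately show ?thesis using r1[of a] r1[of b] K by (simp add: divide_right_mono)
qed

lemma IcA2_diag:
  assumes r0: "\<And>i. Re (r i i) \<ge> 0" and K: "KK > 0"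
  shows "Re (Ic (A2 r kk KK) [a, b] [a, b]) \<ge> (KK - kk - 2) / KK"
proof -
  have "Re (Ic (A2 r kk KK) [a, b] [a, b]) = 1 - (kk + Re (dl a b * dl b a) - Re (r a a) - Re (r b b)) / KK"
    unfolding Ic_def A2_def by (simp add: dl_def)
  also have "\<dots> = (KK - kk - Re (dl a b * dl b a) + Re (r a a) + Re (r b b)) / KK"
    using K by (simp add: field_simps)
  finally have e: "Re (Ic (A2 r kk KK) [a, b] [a, b]) = (KK - kk - Re (dl a b * dl b a) + Re (r a a) + Re (r b b)) / KK" .
  have "Re (dl a b * dl b a) \<le> 1" by (simp add: dl_def)
  then show ?thesis unfolding e using r0[of a] r0[of b] K by (simp add: divide_right_mono)
qed



lemma tr_tpow2: fixes s :: "'n::finite \<Rightarrow> 'n \<Rightarrow> complex"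
  assumes t: "(\<Sum>i\<in>UNIV. s i i) = 1"
  shows "tr (words 2) (tpow 2 s) = 1"
proof -
  have "tr (words 2) (tpow 2 s) = (\<Sum>a\<in>UNIV. \<Sum>b\<in>UNIV. s a a * s b b)"
    unfolding tr_def by (simp only: sum_words2 tpow2)
  also have "\<dots> = (\<Sum>a\<in>UNIV. s a a) * (\<Sum>b\<in>UNIV. s b b)" by (simp add: sum_product)
  finally show ?thesis using t by simp
qed

lemma dist_expand:
  fixes s r :: "'n::finite \<Rightarrow> 'n \<Rightarrow> complex"
  assumes hs: "\<And>i j. s j i = cnj (s i j)" and hr: "\<And>i j. r j i = cnj (r i j)"
  shows "of_real (\<Sum>a\<in>UNIV. \<Sum>b\<in>UNIV. (cmod (s a b - r a b))^2) =
    (\<Sum>a\<in>UNIV. \<Sum>b\<in>UNIV. s a b * s b a) - 2 * (\<Sum>a\<in>UNIV. \<Sum>b\<in>UNIV. r a b * s b a)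
    + (\<Sum>a\<in>UNIV. \<Sum>b\<in>UNIV. r a b * r b a)"
proof -
  have "of_real (\<Sum>a\<in>UNIV. \<Sum>b\<in>UNIV. (cmod (s a b - r a b))^2) =
     (\<Sum>a\<in>UNIV. \<Sum>b\<in>UNIV. (s a b - r a b) * (s b a - r b a))"
  proof -
    have "of_real (\<Sum>a\<in>UNIV. \<Sum>b\<in>UNIV. (cmod (s a b - r a b))^2) =
       (\<Sum>a\<in>UNIV. \<Sum>b\<in>UNIV. complex_of_real ((cmod (s a b - r a b))^2))" by simp
    also have "\<dots> = (\<Sum>a\<in>UNIV. \<Sum>b\<in>UNIV. (s a b - r a b) * cnj (s a b - r a b))"
      by (simp only: zcnj)
    also have "\<dots> = (\<Sum>a\<in>UNIV. \<Sum>b\<in>UNIV. (s a b - r a b) * (s b a - r b a))"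
    proof (intro sum.cong refl)
      fix a b
      show "(s a b - r a b) * cnj (s a b - r a b) = (s a b - r a b) * (s b a - r b a)"
        using hs[of a b] hr[of a b] by simp
    qed
    finally show ?thesis .
  qed
  also have "\<dots> = (\<Sum>a\<in>UNIV. \<Sum>b\<in>UNIV. s a b * s b a) - (\<Sum>a\<in>UNIV. \<Sum>b\<in>UNIV. s a b * r b a)
      - (\<Sum>a\<in>UNIV. \<Sum>b\<in>UNIV. r a b * s b a) + (\<Sum>a\<in>UNIV. \<Sum>b\<in>UNIV. r a b * r b a)"
    by (simp add: algebra_simps sum_subtractf sum.distrib)
  also have "(\<Sum>a\<in>UNIV. \<Sum>b\<in>UNIV. s a b * r b a) = (\<Sum>a\<in>UNIV. \<Sum>b\<in>UNIV. r a b * s b a)"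
  proof -
    have "(\<Sum>a\<in>UNIV. \<Sum>b\<in>UNIV. s a b * r b a) = (\<Sum>b\<in>UNIV. \<Sum>a\<in>UNIV. s a b * r b a)" by (rule sum.swap)
    then show ?thesis by (simp add: mult.commute)
  qed
  finally show ?thesis by simp
qed

lemma rr_real:
  fixes r :: "'n::finite \<Rightarrow> 'n \<Rightarrow> complex"
  assumes hr: "\<And>i j. r j i = cnj (r i j)"
  shows "(\<Sum>a\<in>UNIV. \<Sum>b\<in>UNIV. r a b * r b a) = of_real (\<Sum>a\<in>UNIV. \<Sum>b\<in>UNIV. (cmod (r a b))^2)"
proof -
  have "(\<Sum>a\<in>UNIV. \<Sum>b\<in>UNIV. r a b * r b a) = (\<Sum>a\<in>UNIV. \<Sum>b\<in>UNIV. r a b * cnj (r a b))"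
  proof (intro sum.cong refl)
    fix a b
    show "r a b * r b a = r a b * cnj (r a b)" using hr[of a b] by simp
  qed
  also have "\<dots> = (\<Sum>a\<in>UNIV. \<Sum>b\<in>UNIV. complex_of_real ((cmod (r a b))^2))" by (simp only: zcnj)
  finally show ?thesis by simp
qed

lemma sq_sum_bound:
  fixes f :: "'n::finite \<Rightarrow> 'n \<Rightarrow> complex"
  assumes "\<And>a b. cmod (f a b) \<le> M" "M \<ge> 0"
  shows "(\<Sum>a\<in>UNIV. \<Sum>b\<in>UNIV. (cmod (f a b))^2) \<le> real CARD('n) ^ 2 * M^2"
proof -
  have "(\<Sum>a\<in>UNIV. \<Sum>b\<in>UNIV. (cmod (f a b))^2) \<le> (\<Sum>a\<in>(UNIV::'n set). \<Sum>b\<in>(UNIV::'n set). M^2)"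
    by (intro sum_mono power_mono assms norm_ge_zero)
  also have "\<dots> = real CARD('n) ^ 2 * M^2" by (simp add: power2_eq_square)
  finally show ?thesis .
qed

lemma norm_sq_mfun:
  fixes \<sigma> \<rho> :: "complex^'n^'n"
  shows "(norm (\<sigma> - \<rho>))^2 = (\<Sum>a\<in>UNIV. \<Sum>b\<in>UNIV. (cmod (mfun \<sigma> a b - mfun \<rho> a b))^2)"
proof -
  have row: "(norm (x :: complex^'n))^2 = (\<Sum>b\<in>UNIV. (cmod (x $ b))^2)" for x
    unfolding norm_vec_def L2_set_def by (simp add: sum_nonneg)
  have "(norm (\<sigma> - \<rho>))^2 = (\<Sum>a\<in>UNIV. (norm ((\<sigma> - \<rho>) $ a))^2)"
    unfolding norm_vec_def L2_set_def by (simp add: sum_nonneg)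
  also have "\<dots> = (\<Sum>a\<in>UNIV. \<Sum>b\<in>UNIV. (cmod (mfun \<sigma> a b - mfun \<rho> a b))^2)"
    unfolding row mfun_def by simp
  finally show ?thesis .
qed



lemma words2_cases: assumes "xs \<in> words 2" obtains a b where "xs = [a, b]"
  using assms unfolding words_def by (auto simp: numeral_2_eq_2 length_Suc_conv)

theorem theorem11:
  fixes F :: "(complex^'n^'n) set" and \<rho> :: "complex^'n^'n"
  assumes "CARD('n) \<ge> 2"
    and "closed F"
    and "\<forall>\<sigma>\<in>F. density UNIV (mfun \<sigma>)"
    and "density UNIV (mfun \<rho>)"
    and "\<rho> \<notin> F"
  shows "\<exists>(n :: nat \<Rightarrow> nat) (N :: nat \<Rightarrow> nat) (p :: nat \<Rightarrow> nat \<Rightarrow> real)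
           (\<Lambda> :: nat \<Rightarrow> nat \<Rightarrow> ('n list \<Rightarrow> 'n list \<Rightarrow> complex) \<Rightarrow> (nat \<Rightarrow> nat \<Rightarrow> complex)).
           (\<forall>m\<in>{2..CARD('n)}. ensemble (words m) (n m) (N m) (p m) (\<Lambda> m)) \<and>
           (\<exists>c<1. \<forall>\<sigma>\<in>F. \<exists>m\<in>{2..CARD('n)}.
              minerr (n m) (N m) (p m) (\<Lambda> m) (tpow m (mfun \<sigma>)) > 0 \<and>
              minerr (n m) (N m) (p m) (\<Lambda> m) (tpow m (mfun \<rho>))
                \<le> c * minerr (n m) (N m) (p m) (\<Lambda> m) (tpow m (mfun \<sigma>)))"
proof -
  define r where "r = mfun \<rho>"
  define D where "D = real CARD('n)"
  define kk where "kk = 4 * D^2 + 8"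
  define KK where "KK = 2 * kk"
  define P where "P = (\<Sum>a\<in>UNIV. \<Sum>b\<in>UNIV. (cmod (r a b))^2)"
  define Dist where "Dist = (\<lambda>s::'n \<Rightarrow> 'n \<Rightarrow> complex. \<Sum>a\<in>UNIV. \<Sum>b\<in>UNIV. (cmod (s a b - r a b))^2)"
  define Am :: "nat \<Rightarrow> 'n list \<Rightarrow> 'n list \<Rightarrow> complex"
    where "Am = (\<lambda>m. if m = 2 then A2 r kk KK else (\<lambda>_ _. 0))"
  have rdens: "density UNIV r" using assms(4) unfolding r_def .
  note rf = dens_facts[OF rdens]
  have D2: "D \<ge> 2" using assms(1) unfolding D_def by simp
  have kk0: "kk \<ge> 0" unfolding kk_def by simp
  have kk8: "kk \<ge> 8" unfolding kk_def by simp
  have K: "KK > 0" unfolding KK_def using kk8 by simp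
  have kkK: "kk \<le> KK" unfolding KK_def using kk0 by simp
  have cardW: "real (card (words 2 :: 'n list set)) = D^2" by (simp add: card_words D_def)
  have c1: "kk + 3 * real (card (words 2 :: 'n list set)) \<le> 2 * (kk - 2)"
    unfolding cardW kk_def by simp
  have c2: "(KK - kk) + 3 * real (card (words 2 :: 'n list set)) \<le> 2 * ((KK - kk) - 2)"
    unfolding cardW KK_def kk_def by simp
  have hA2: "herm B (A2 r kk KK)" for B :: "'n list set" by (rule A2_herm[OF rf(8)])
  have dA2: "ddom (words 2) (A2 r kk KK)"
  proof (rule ddom_crit[OF finite_words K c1])
    fix xs ys :: "'n list"
    show "cmod (A2 r kk KK xs ys) \<le> (kk * Re (dl xs ys) + 3) / KK" by (rule A2_pw[OF rf(7) K kk0])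
  next
    fix xs :: "'n list" assume "xs \<in> words 2"
    then obtain a b where xs: "xs = [a, b]" by (rule words2_cases)
    show "(kk - 2) / KK \<le> Re (A2 r kk KK xs xs)" unfolding xs by (rule A2_diag[OF rf(6) K])
  qed
  have dIA2: "ddom (words 2) (Ic (A2 r kk KK))"
  proof (rule ddom_crit[OF finite_words K c2])
    fix xs ys :: "'n list"
    show "cmod (Ic (A2 r kk KK) xs ys) \<le> ((KK - kk) * Re (dl xs ys) + 3) / KK" by (rule IcA2_pw[OF rf(7) K kkK])
  next
    fix xs :: "'n list" assume "xs \<in> words 2"
    then obtain a b where xs: "xs = [a, b]" by (rule words2_cases)
    show "(KK - kk - 2) / KK \<le> Re (Ic (A2 r kk KK) xs xs)" unfolding xs by (rule IcA2_diag[OF rf(5) K])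
  qed
  have chan: "channel (words m) 2 (LL (words m) (Am m) i)" if "i < 2" for m i
  proof (cases "i = 0")
    case True
    show ?thesis
    proof (cases "m = 2")
      case True
      have "LL (words m) (Am m) i = mp (words 2) (A2 r kk KK)" using True \<open>i = 0\<close> by (simp add: LL_def Am_def)
      then show ?thesis using True channel_mp[OF finite_words hA2 dA2 herm_Ic[OF hA2] dIA2] by simp
    next
      case False
      have "LL (words m) (Am m) i = mp (words m) (\<lambda>_ _. 0)" using False \<open>i = 0\<close> by (simp add: LL_def Am_def)
      moreover have "channel (words m :: 'n list set) 2 (mp (words m) (\<lambda>_ _. 0))"
      proof -
        have h1: "herm (words m :: 'n list set) (Ic (\<lambda>_ _. 0))" unfolding Ic_zero by (rule herm_dl)
        have d1: "ddom (words m :: 'n list set) (Ic (\<lambda>_ _. 0))" unfolding Ic_zero by (rule ddom_dl) (rule finite_words)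
        show ?thesis by (rule channel_mp[OF finite_words herm_zero ddom_zero h1 d1])
      qed
      ultimately show ?thesis by simp
    qed
  next
    case False
    then have "LL (words m) (Am m) i = mp (words m) dl" by (simp add: LL_def)
    moreover have "channel (words m :: 'n list set) 2 (mp (words m) dl)"
    proof -
      have h1: "herm (words m :: 'n list set) (Ic dl)" unfolding Ic_dl by (rule herm_zero)
      have d1: "ddom (words m :: 'n list set) (Ic dl)" unfolding Ic_dl by (rule ddom_zero)
      show ?thesis by (rule channel_mp[OF finite_words herm_dl ddom_dl[OF finite_words] h1 d1])
    qed
    ultimately show ?thesis by simp
  qed
  have ens: "\<forall>m\<in>{2..CARD('n)}. ensemble (words m) 2 2 (\<lambda>_. 1/2) (LL (words m) (Am m))"
    unfolding ensemble_def using chan by (simp add: sum2)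
  have P0: "P \<ge> 0" unfolding P_def by (simp add: sum_nonneg)
  have PD: "P \<le> D^2" unfolding P_def D_def using sq_sum_bound[of r 1] rf(7) by simp
  have mval: "minerr 2 2 (\<lambda>_. 1/2) (LL (words 2) (Am 2)) (tpow 2 s) = (kk - P + Dist s) / KK / 2"
    if sd: "density UNIV s" for s
  proof -
    note sf = dens_facts[OF sd]
    have "TT (words 2) (A2 r kk KK) (tpow 2 s) =
      (of_real kk + (\<Sum>a\<in>UNIV. \<Sum>b\<in>UNIV. s a b * s b a) - 2 * (\<Sum>a\<in>UNIV. \<Sum>b\<in>UNIV. r a b * s b a)) / of_real KK"
      by (rule g_formula[of s, OF sf(3)])
    also have "\<dots> = (of_real kk + of_real (Dist s) - of_real P) / of_real KK"
    proof -
      have de: "complex_of_real (Dist s) = (\<Sum>a\<in>UNIV. \<Sum>b\<in>UNIV. s a b * s b a)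
          - 2 * (\<Sum>a\<in>UNIV. \<Sum>b\<in>UNIV. r a b * s b a) + of_real P"
        unfolding Dist_def P_def by (simp only: dist_expand[of s r, OF sf(8) rf(8)] rr_real[of r, OF rf(8)])
      show ?thesis unfolding de by (simp add: algebra_simps)
    qed
    also have "\<dots> = of_real ((kk - P + Dist s) / KK)" by simp
    finally have g: "TT (words 2) (A2 r kk KK) (tpow 2 s) = of_real ((kk - P + Dist s) / KK)" .
    have Ds0: "Dist s \<ge> 0" unfolding Dist_def by (simp add: sum_nonneg)
    have "Dist s \<le> D^2 * 2^2" unfolding Dist_def D_def
    proof (rule sq_sum_bound)
      fix a b
      have "cmod (s a b - r a b) \<le> cmod (s a b) + cmod (r a b)" by (rule norm_triangle_ineq4)
      then show "cmod (s a b - r a b) \<le> 2" using sf(7)[of a b] rf(7)[of a b] by simp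
    qed simp
    then have DsD: "Dist s \<le> 4 * D^2" by simp
    have Dsq: "D^2 \<ge> 0" by simp
    have num0: "kk - P + Dist s \<ge> 0" using PD Ds0 Dsq unfolding kk_def by linarith
    have aux: "\<And>x y z::real. 0 \<le> y \<Longrightarrow> z \<le> 4 * x \<Longrightarrow> (4 * x + 8) - y + z \<le> 2 * (4 * x + 8)" by simp
    have num1: "kk - P + Dist s \<le> KK" unfolding KK_def kk_def by (rule aux[OF P0 DsD])
    have r0: "0 \<le> (kk - P + Dist s) / KK" using num0 K by simp
    have r1: "(kk - P + Dist s) / KK \<le> 1" using num1 K by simp
    have "minerr 2 2 (\<lambda>_. 1/2) (LL (words 2) (A2 r kk KK)) (tpow 2 s) = (kk - P + Dist s) / KK / 2"
      by (rule minerr_formula[OF finite_words g tr_tpow2[of s, OF sf(3)] r0 r1])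
    then show ?thesis by (simp add: Am_def)
  qed
  obtain e where e0: "e > 0" and eF: "\<forall>\<sigma>\<in>F. e \<le> norm (\<sigma> - \<rho>)"
  proof -
    have "open (- F)" using assms(2) by (simp add: open_Compl)
    moreover have "\<rho> \<in> - F" using assms(5) by simp
    ultimately obtain e where "e > 0" "\<forall>y. dist y \<rho> < e \<longrightarrow> y \<in> - F"
      unfolding open_dist by blast
    then have "\<forall>\<sigma>\<in>F. e \<le> norm (\<sigma> - \<rho>)" by (auto simp: dist_norm not_less[symmetric])
    then show ?thesis using \<open>e > 0\<close> that by blast
  qed
  define C where "C = kk - P"
  have C0: "C > 0" unfolding C_def kk_def using PD zero_le_power2[of D] by linarith
  define c where "c = C / (C + e^2)"
  have pe: "e^2 > 0" using e0 by simp
  have cpos: "C + e^2 > 0" using C0 pe by (rule add_pos_pos)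
  have cl1: "c < 1" unfolding c_def using cpos pe by (simp add: divide_less_eq)
  have Dr: "Dist r = 0" unfolding Dist_def by simp
  have mr: "minerr 2 2 (\<lambda>_. 1/2) (LL (words 2) (Am 2)) (tpow 2 (mfun \<rho>)) = C / KK / 2"
    using mval[OF rdens] Dr unfolding r_def C_def by simp
  have main: "\<exists>m\<in>{2..CARD('n)}.
      minerr 2 2 (\<lambda>_. 1/2) (LL (words m) (Am m)) (tpow m (mfun \<sigma>)) > 0 \<and>
      minerr 2 2 (\<lambda>_. 1/2) (LL (words m) (Am m)) (tpow m (mfun \<rho>))
        \<le> c * minerr 2 2 (\<lambda>_. 1/2) (LL (words m) (Am m)) (tpow m (mfun \<sigma>))" if sF: "\<sigma> \<in> F" for \<sigma>
  proof (rule bexI[of _ 2])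
    have sd: "density UNIV (mfun \<sigma>)" using assms(3) sF by blast
    have ms: "minerr 2 2 (\<lambda>_. 1/2) (LL (words 2) (Am 2)) (tpow 2 (mfun \<sigma>)) = (C + Dist (mfun \<sigma>)) / KK / 2"
      using mval[OF sd] unfolding C_def by simp
    have "e^2 \<le> (norm (\<sigma> - \<rho>))^2" using eF sF e0 by (simp add: power_mono)
    then have eD: "e^2 \<le> Dist (mfun \<sigma>)" unfolding norm_sq_mfun Dist_def r_def .
    have Dpos: "Dist (mfun \<sigma>) > 0" using eD e0 by (meson less_le_trans zero_less_power)
    have "C \<le> c * (C + Dist (mfun \<sigma>))"
    proof -
      have "c * (C + e^2) = C" unfolding c_def using cpos by simp
      moreover have "c * (C + e^2) \<le> c * (C + Dist (mfun \<sigma>))"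
        using eD C0 cpos unfolding c_def by (intro mult_left_mono) simp_all
      ultimately show ?thesis by simp
    qed
    then have "C / KK / 2 \<le> c * ((C + Dist (mfun \<sigma>)) / KK / 2)"
      using K by (simp add: divide_right_mono)
    then show "minerr 2 2 (\<lambda>_. 1/2) (LL (words 2) (Am 2)) (tpow 2 (mfun \<sigma>)) > 0 \<and>
      minerr 2 2 (\<lambda>_. 1/2) (LL (words 2) (Am 2)) (tpow 2 (mfun \<rho>))
        \<le> c * minerr 2 2 (\<lambda>_. 1/2) (LL (words 2) (Am 2)) (tpow 2 (mfun \<sigma>))"
      unfolding ms mr using C0 Dpos K by simp
    show "2 \<in> {2..CARD('n)}" using assms(1) by simp
  qed
  show ?thesis
    apply (rule exI[of _ "\<lambda>_. 2"], rule exI[of _ "\<lambda>_. 2"], rule exI[of _ "\<lambda>_ _. 1/2"],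
        rule exI[of _ "\<lambda>m. LL (words m) (Am m)"])
    using ens main cl1 by blast
qed


end
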